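(* For every $\pi\in S_n$, $\mathrm{inv}(\pi)\equiv\mathrm{inv}(dp(\pi))\pmod 2$.
   Context: $S_n$ is the symmetric group on $[n]$, $\mathrm{inv}(\pi)=\#\{(i,j):i<j,\pi_i>\pi_j\}$ (with $\mathrm{inv}$ of the empty word equal to $0$). For a word $w$ of distinct positive integers $a_1<\dots<a_m$, its reduction is obtained by replacing each $a_j$ by $j$. The derangement part $dp(\pi)$ is the reduction of the subword of $\pi$ consisting of the letters $\pi_i$ with $\pi_i\ne i$. *)

theory Defs
  imports "HOL-Combinatorics.Permutations"
begin

definition inv_word :: "nat list \<Rightarrow> nat" where
  "inv_word w = card {(i, j). i < j \<and> j < length w \<and> w ! i > w ! j}"

text \<open>Reduction of a word of distinct positive integers: replace each letter by its rank
  (the j-th smallest letter becomes j).\<close>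
definition reduction :: "nat list \<Rightarrow> nat list" where
  "reduction w = map (\<lambda>a. card {b \<in> set w. b \<le> a}) w"

definition one_line :: "nat \<Rightarrow> (nat \<Rightarrow> nat) \<Rightarrow> nat list" where
  "one_line n \<pi> = map \<pi> [1..<n+1]"

text \<open>Derangement part: reduction of the subword of non-fixed letters.\<close>
definition dp :: "nat \<Rightarrow> (nat \<Rightarrow> nat) \<Rightarrow> nat list" where
  "dp n \<pi> = reduction (map \<pi> (filter (\<lambda>i. \<pi> i \<noteq> i) [1..<n+1]))"

end

theory Submission
  imports Defs
begin

definition invset :: "(nat \<Rightarrow> nat) \<Rightarrow> nat set \<Rightarrow> (nat \<times> nat) set" where
  "invset f X = {(a,b). a \<in> X \<and> b \<in> X \<and> a < b \<and> f a > f b}"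

lemma inv_word_sorted:
  assumes "sorted_wrt (<) xs"
  shows "inv_word (map f xs) = card (invset f (set xs))"
proof -
  have d: "distinct xs" using assms strict_sorted_iff by blast
  have "bij_betw (\<lambda>(i,j). (xs!i, xs!j))
     {(i, j). i < j \<and> j < length (map f xs) \<and> map f xs ! i > map f xs ! j} (invset f (set xs))"
  proof (rule bij_betwI')
    fix x y assume "x \<in> {(i, j). i < j \<and> j < length (map f xs) \<and> map f xs ! i > map f xs ! j}"
      "y \<in> {(i, j). i < j \<and> j < length (map f xs) \<and> map f xs ! i > map f xs ! j}"
    then show "((\<lambda>(i,j). (xs!i, xs!j)) x = (\<lambda>(i,j). (xs!i, xs!j)) y) = (x = y)"
      using d by (auto simp: nth_eq_iff_index_eq)
  next
    fix x assume "x \<in> {(i, j). i < j \<and> j < length (map f xs) \<and> map f xs ! i > map f xs ! j}"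
    then show "(\<lambda>(i,j). (xs!i, xs!j)) x \<in> invset f (set xs)"
      using assms by (auto simp: invset_def sorted_wrt_iff_nth_less)
  next
    fix y assume "y \<in> invset f (set xs)"
    then obtain a b where y: "y = (a,b)" "a \<in> set xs" "b \<in> set xs" "a < b" "f a > f b"
      by (auto simp: invset_def)
    obtain i where i: "i < length xs" "xs ! i = a" using y by (metis in_set_conv_nth)
    obtain j where j: "j < length xs" "xs ! j = b" using y by (metis in_set_conv_nth)
    have "i < j"
    proof (rule ccontr)
      assume "\<not> i < j"
      then have "j < i \<or> j = i" by auto
      then show False
      proof
        assume "j < i" then have "xs ! j < xs ! i" using assms i by (auto simp: sorted_wrt_iff_nth_less)
        then show False using i j y by simp
      qed (use i j y in simp)
    qed
    then show "\<exists>x\<in>{(i, j). i < j \<and> j < length (map f xs) \<and> map f xs ! i > map f xs ! j}.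
        y = (\<lambda>(i,j). (xs!i, xs!j)) x"
      using i j y by (intro bexI[of _ "(i,j)"]) auto
  qed
  then show ?thesis unfolding inv_word_def by (rule bij_betw_same_card)
qed

lemma reduction_inv: "inv_word (reduction w) = inv_word w"
proof -
  have mono: "card {b \<in> set w. b \<le> a} \<le> card {b \<in> set w. b \<le> c}" if "a \<le> c" for a c
    by (rule card_mono) (use that in auto)
  have strict: "card {b \<in> set w. b \<le> a} < card {b \<in> set w. b \<le> c}" if "a < c" "c \<in> set w" for a c
  proof (rule psubset_card_mono)
    show "{b \<in> set w. b \<le> a} \<subset> {b \<in> set w. b \<le> c}"
      using that by auto (metis (mono_tags, lifting) leD mem_Collect_eq order_refl)
  qed simp
  have "\<And>i j. i < length w \<Longrightarrow> j < length w \<Longrightarrow>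
     (reduction w ! i > reduction w ! j) = (w ! i > w ! j)"
  proof -
    fix i j assume ij: "i < length w" "j < length w"
    show "(reduction w ! i > reduction w ! j) = (w ! i > w ! j)"
    proof (cases "w ! i > w ! j")
      case True then show ?thesis using strict[of "w!j" "w!i"] ij
        by (auto simp: reduction_def)
    next
      case False then show ?thesis using mono[of "w!i" "w!j"] ij
        by (auto simp: reduction_def)
    qed
  qed
  then have "{(i, j). i < j \<and> j < length (reduction w) \<and> reduction w ! i > reduction w ! j}
     = {(i, j). i < j \<and> j < length w \<and> w ! i > w ! j}"
    by (auto simp: reduction_def[of w] simp del: nth_map)
  then show ?thesis by (simp add: inv_word_def)
qed

lemma fixed_balance:
  fixes \<pi> :: "nat \<Rightarrow> nat" and k :: nat
  assumes p: "\<pi> permutes S" and fin: "finite S" and kS: "k \<in> S" and fk: "\<pi> k = k"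
  shows "card {b \<in> S. b < k \<and> \<pi> b > k} = card {b \<in> S. k < b \<and> \<pi> b < k}"
proof -
  let ?A = "{b \<in> S. b < k \<and> \<pi> b > k}" and ?B = "{b \<in> S. k < b \<and> \<pi> b < k}"
  let ?C = "{b \<in> S. b < k \<and> \<pi> b < k}"
  have inj: "inj_on \<pi> S" using p permutes_inj inj_on_subset by blast
  have neq: "\<pi> b \<noteq> k" if "b \<noteq> k" for b
    using permutes_inj[OF p] fk that by (metis injD)
  have e1: "{b \<in> S. b < k} = ?A \<union> ?C"
  proof (rule set_eqI)
    fix b show "b \<in> {b \<in> S. b < k} \<longleftrightarrow> b \<in> ?A \<union> ?C"
      proof (cases "b < k")
      case True then have "b \<noteq> k" by simp
      then have "\<pi> b \<noteq> k" by (rule neq)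
      then show ?thesis using True by auto
    qed auto
  qed
  have e2: "{b \<in> S. \<pi> b < k} = ?C \<union> ?B"
  proof (rule set_eqI)
    fix b show "b \<in> {b \<in> S. \<pi> b < k} \<longleftrightarrow> b \<in> ?C \<union> ?B"
    proof (cases "\<pi> b < k")
      case True then have "b \<noteq> k" using fk by auto
      then have "b < k \<or> k < b" by auto
      then show ?thesis using True by auto
    qed auto
  qed
  have img: "\<pi> ` {b \<in> S. \<pi> b < k} = {b \<in> S. b < k}"
  proof
    show "\<pi> ` {b \<in> S. \<pi> b < k} \<subseteq> {b \<in> S. b < k}" using permutes_in_image[OF p] by auto
  next
    show "{b \<in> S. b < k} \<subseteq> \<pi> ` {b \<in> S. \<pi> b < k}"
    proof
      fix c assume c: "c \<in> {b \<in> S. b < k}"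
      then have "c \<in> \<pi> ` S" using permutes_image[OF p] by simp
      then obtain b where "b \<in> S" "c = \<pi> b" by auto
      then show "c \<in> \<pi> ` {b \<in> S. \<pi> b < k}" using c by auto
    qed
  qed
  have "card {b \<in> S. \<pi> b < k} = card {b \<in> S. b < k}"
    using img card_image[OF inj_on_subset[OF inj, of "{b \<in> S. \<pi> b < k}"]] by auto
  then have "card ?A + card ?C = card ?C + card ?B"
  proof -
    have "card {b \<in> S. b < k} = card ?A + card ?C"
      unfolding e1 by (rule card_Un_disjoint) (use fin in auto)
    moreover have "card {b \<in> S. \<pi> b < k} = card ?C + card ?B"
      unfolding e2 by (rule card_Un_disjoint) (use fin in auto)
    ultimately show ?thesis using \<open>card {b \<in> S. \<pi> b < k} = card {b \<in> S. b < k}\<close> by simp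
  qed
  then show ?thesis by simp
qed

lemma parity_main:
  fixes \<pi> :: "nat \<Rightarrow> nat"
  assumes p: "\<pi> permutes S" and fin: "finite S"
  shows "even (card (invset \<pi> S)) \<longleftrightarrow> even (card (invset \<pi> {i \<in> S. \<pi> i \<noteq> i}))"
proof -
  let ?D = "{i \<in> S. \<pi> i \<noteq> i}" and ?F = "{i \<in> S. \<pi> i = i}"
  define A where "A k = {b \<in> S. b < k \<and> \<pi> b > k}" for k
  define B where "B k = {b \<in> S. k < b \<and> \<pi> b < k}" for k
  define E1 where "E1 = {(a,b). (a,b) \<in> invset \<pi> S \<and> b \<in> ?F}"
  define E2 where "E2 = {(a,b). (a,b) \<in> invset \<pi> S \<and> a \<in> ?F}"
  have finI: "finite (invset \<pi> S)"
    by (rule finite_subset[of _ "S \<times> S"]) (auto simp: invset_def fin)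
  have split: "invset \<pi> S = invset \<pi> ?D \<union> (E1 \<union> E2)"
    by (auto simp: invset_def E1_def E2_def)
  have disj: "invset \<pi> ?D \<inter> (E1 \<union> E2) = {}"
    by (auto simp: invset_def E1_def E2_def)
  have disj2: "E1 \<inter> E2 = {}"
    by (auto simp: invset_def E1_def E2_def)
  have fE1: "finite E1" "finite E2" "finite (invset \<pi> ?D)"
    using finI split by (auto intro: finite_subset)
  have E1eq: "E1 = (\<lambda>(k,a). (a,k)) ` Sigma ?F A"
    by (auto simp: E1_def A_def invset_def image_iff)
  have E2eq: "E2 = Sigma ?F B"
    by (auto simp: E2_def B_def invset_def)
  have finA: "finite (A k)" "finite (B k)" for k using fin by (auto simp: A_def B_def)
  have cE1: "card E1 = (\<Sum>k\<in>?F. card (A k))"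
  proof -
    have "inj_on (\<lambda>(k,a). (a,k)) (Sigma ?F A)" by (auto simp: inj_on_def)
    then have "card E1 = card (Sigma ?F A)" unfolding E1eq by (rule card_image)
    also have "\<dots> = (\<Sum>k\<in>?F. card (A k))" using fin finA by (simp add: card_SigmaI)
    finally show ?thesis .
  qed
  have cE2: "card E2 = (\<Sum>k\<in>?F. card (B k))"
    unfolding E2eq using fin finA by (simp add: card_SigmaI)
  have "(\<Sum>k\<in>?F. card (A k)) = (\<Sum>k\<in>?F. card (B k))"
    by (rule sum.cong) (auto simp: A_def B_def intro: fixed_balance[OF p fin])
  then have "card E1 = card E2" using cE1 cE2 by simp
  moreover have "card (invset \<pi> S) = card (invset \<pi> ?D) + (card E1 + card E2)"
    using split disj disj2 fE1 by (simp add: card_Un_disjoint)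
  ultimately show ?thesis by simp
qed

theorem mainTheorem6:
  fixes n :: nat and \<pi> :: "nat \<Rightarrow> nat"
  assumes "\<pi> permutes {1..n}"
  shows "even (inv_word (one_line n \<pi>)) \<longleftrightarrow> even (inv_word (dp n \<pi>))"
proof -
  have s1: "sorted_wrt (<) [1..<n+1]" by (rule sorted_wrt_upt)
  have s2: "sorted_wrt (<) (filter (\<lambda>i. \<pi> i \<noteq> i) [1..<n+1])"
    using s1 by (simp add: sorted_wrt_filter)
  have a: "inv_word (one_line n \<pi>) = card (invset \<pi> {1..n})"
  proof -
    have "set [1..<n+1] = {1..n}" by auto
    then show ?thesis unfolding one_line_def using inv_word_sorted[OF s1, of \<pi>] by (simp only:)
  qed
  have b: "inv_word (dp n \<pi>) = card (invset \<pi> {i \<in> {1..n}. \<pi> i \<noteq> i})"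
  proof -
    have "set (filter (\<lambda>i. \<pi> i \<noteq> i) [1..<n+1]) = {i \<in> {1..n}. \<pi> i \<noteq> i}" by auto
    then show ?thesis unfolding dp_def reduction_inv using inv_word_sorted[OF s2, of \<pi>] by simp
  qed
  show ?thesis unfolding a b by (rule parity_main[OF assms]) simp
qed

end
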